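(* Let $\mathbb{F}_q$ have characteristic $p\neq2$, $f(X)=aX^2+c\in\mathbb{F}_q[X]$ with $a\ne0$, $r\ge1$, $k\ge 2$, and let $(x_1,\dots,x_k)\in\overline{\mathbb{F}_q}^{\,k}$ satisfy $f^r(x_1)=\dots=f^r(x_k)$. For distinct $i,j\in\{1,\dots,k\}$ let $d(i,j)=d(j,i)$ be the smallest $d\in\{-1,0,1,\dots,r-1\}$ with $\phi(x_i,x_j;d)=0$ (such $d$ exists). Then the complete weighted graph on $\{1,\dots,k\}$ with edge weights $d(i,j)$ is proper.
   Context: Iterates: $f^0(X)=X$, $f^{j+1}(X)=f(f^j(X))$. Define $\phi(X,Y;-1)=X-Y$ and $\phi(X,Y;d)=f^d(X)+f^d(Y)$ for integers $d\ge 0$. A $(D,k)$-graph is a weighted graph on $k$ vertices in which each edge $ij$ carries an integer weight $d(i,j)\in[-1,D]$; it is complete if every pair of distinct vertices is joined by an edge. A complete $(D,k)$-graph is proper if for all distinct vertices $a,b,c$ with $d(a,b)\le d(a,c)\le d(b,c)$ one has either $d(a,b)=d(a,c)=d(b,c)=-1$, or $d(a,b)<d(a,c)=d(b,c)$. *)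

theory Defs
  imports "HOL-Computational_Algebra.Polynomial"
begin

definition is_subfield :: "'a::field set \<Rightarrow> bool" where
  "is_subfield F \<longleftrightarrow> 0 \<in> F \<and> 1 \<in> F \<and>
     (\<forall>x\<in>F. \<forall>y\<in>F. x + y \<in> F \<and> x * y \<in> F) \<and>
     (\<forall>x\<in>F. - x \<in> F \<and> inverse x \<in> F)"

definition is_algebraic_closure_of :: "'a::field set \<Rightarrow> bool" where
  "is_algebraic_closure_of F \<longleftrightarrow> is_subfield F \<and>
     (\<forall>p :: 'a poly. degree p > 0 \<longrightarrow> (\<exists>x. poly p x = 0)) \<and>
     (\<forall>x :: 'a. \<exists>p :: 'a poly. p \<noteq> 0 \<and> (\<forall>i. coeff p i \<in> F) \<and> poly p x = 0)"

definition phi :: "('a::ring \<Rightarrow> 'a) \<Rightarrow> 'a \<Rightarrow> 'a \<Rightarrow> int \<Rightarrow> 'a" where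
  "phi f X Y d = (if d = -1 then X - Y else (f ^^ nat d) X + (f ^^ nat d) Y)"

definition complete_Dk_graph :: "int \<Rightarrow> nat \<Rightarrow> (nat \<Rightarrow> nat \<Rightarrow> int) \<Rightarrow> bool" where
  "complete_Dk_graph D k w \<longleftrightarrow>
     (\<forall>i\<in>{1..k}. \<forall>j\<in>{1..k}. i \<noteq> j \<longrightarrow> w i j = w j i \<and> -1 \<le> w i j \<and> w i j \<le> D)"

definition proper_graph :: "nat \<Rightarrow> (nat \<Rightarrow> nat \<Rightarrow> int) \<Rightarrow> bool" where
  "proper_graph k w \<longleftrightarrow>
     (\<forall>a\<in>{1..k}. \<forall>b\<in>{1..k}. \<forall>c\<in>{1..k}.
        a \<noteq> b \<and> a \<noteq> c \<and> b \<noteq> c \<and> w a b \<le> w a c \<and> w a c \<le> w b c \<longrightarrow>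
        (w a b = -1 \<and> w a c = -1 \<and> w b c = -1) \<or> (w a b < w a c \<and> w a c = w b c))"

end

theory Submission
  imports Defs
begin

lemma two_nz:
  assumes "CHAR('a::field) \<noteq> 2"
  shows "(2::'a) \<noteq> 0"
proof
  assume h: "(2::'a) = 0"
  have "of_nat 2 = (0::'a)" using h by simp
  hence "CHAR('a) dvd 2" by (simp only: of_nat_eq_0_iff_char_dvd)
  moreover have "CHAR('a) \<noteq> 1"
  proof
    assume "CHAR('a) = 1"
    hence "of_nat 1 = (0::'a)" by (simp only: of_nat_eq_0_iff_char_dvd) simp
    thus False by simp
  qed
  ultimately have "CHAR('a) = 2" using assms
    by (metis dvd_antisym dvd_refl nat_dvd_1_iff_1 two_is_prime_nat prime_nat_iff)
  thus False using assms by simp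
qed

theorem lemma2:
  fixes Fq :: "'a::field set" and a c :: 'a and r k :: nat and x :: "nat \<Rightarrow> 'a"
    and f :: "'a \<Rightarrow> 'a" and d :: "nat \<Rightarrow> nat \<Rightarrow> int"
  assumes "finite Fq" and "is_algebraic_closure_of Fq"
    and "CHAR('a) \<noteq> 2"
    and "a \<in> Fq" and "c \<in> Fq" and "a \<noteq> 0"
    and "f = (\<lambda>X. a * X ^ 2 + c)"
    and "r \<ge> 1" and "k \<ge> 2"
    and "\<forall>i\<in>{1..k}. \<forall>j\<in>{1..k}. (f ^^ r) (x i) = (f ^^ r) (x j)"
    and "d = (\<lambda>i j. LEAST e. -1 \<le> e \<and> e \<le> int r - 1 \<and> phi f (x i) (x j) e = 0)"
  shows "(\<forall>i\<in>{1..k}. \<forall>j\<in>{1..k}. i \<noteq> j \<longrightarrow>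
            (\<exists>e. -1 \<le> e \<and> e \<le> int r - 1 \<and> phi f (x i) (x j) e = 0))
         \<and> complete_Dk_graph (int r - 1) k d \<and> proper_graph k d"
proof -
  define g where "g n i = (f ^^ n) (x i)" for n i
  define m where "m i j = (LEAST n. g n i = g n j)" for i j
  have fsq: "f X = f Y \<longleftrightarrow> X = Y \<or> X = - Y" for X Y
  proof -
    have "f X = f Y \<longleftrightarrow> a * X^2 = a * Y^2" using assms(7) by simp
    also have "\<dots> \<longleftrightarrow> X^2 = Y^2" using assms(6) by simp
    also have "\<dots> \<longleftrightarrow> X = Y \<or> X = - Y" by (rule power2_eq_iff)
    finally show ?thesis .
  qed
  have gS: "g (Suc n) i = f (g n i)" for n i by (simp add: g_def)
  have mono: "g n i = g n j \<Longrightarrow> g (n + t) i = g (n + t) j" for n t i j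
    by (induction t) (simp_all add: gS)
  have mono': "g n i = g n j \<Longrightarrow> n \<le> n' \<Longrightarrow> g n' i = g n' j" for n n' i j
    using mono[of n i j "n' - n"] by simp
  have ex: "i \<in> {1..k} \<Longrightarrow> j \<in> {1..k} \<Longrightarrow> g (m i j) i = g (m i j) j \<and> m i j \<le> r" for i j
    using assms(10) unfolding m_def g_def by (metis (mono_tags, lifting) LeastI Least_le)
  have mmin: "g n i = g n j \<Longrightarrow> m i j \<le> n" for n i j
    unfolding m_def by (rule Least_le)
  have g0: "g 0 i = x i" for i by (simp add: g_def)
  have phin: "e \<ge> 0 \<Longrightarrow> phi f (x i) (x j) e = g (nat e) i + g (nat e) j" for e i j
    by (simp add: phi_def g_def)
  have phim1: "phi f (x i) (x j) (-1) = x i - x j" for i j by (simp add: phi_def)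
  define P where "P i j e \<longleftrightarrow> -1 \<le> e \<and> e \<le> int r - 1 \<and> phi f (x i) (x j) e = 0" for i j e
  have dP: "d i j = (LEAST e. P i j e)" for i j using assms(11) P_def by simp
  have key: "i \<in> {1..k} \<Longrightarrow> j \<in> {1..k} \<Longrightarrow> P i j (int (m i j) - 1) \<and> d i j = int (m i j) - 1" for i j
  proof -
    assume i: "i \<in> {1..k}" and j: "j \<in> {1..k}"
    have P1: "P i j (int (m i j) - 1)"
    proof (cases "m i j")
      case 0
      then show ?thesis using ex[OF i j] assms(8) by (simp add: P_def phim1 g0)
    next
      case (Suc n)
      have "g n i \<noteq> g n j" using mmin[of n i j] Suc by auto
      moreover have "f (g n i) = f (g n j)" using ex[OF i j] Suc by (simp add: gS)
      ultimately have "g n i = - g n j" using fsq by blast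
      then show ?thesis using Suc ex[OF i j] by (simp add: P_def phin)
    qed
    have P2: "P i j e \<Longrightarrow> int (m i j) - 1 \<le> e" for e
    proof -
      assume pe: "P i j e"
      show ?thesis
      proof (cases "e = -1")
        case True
        then have "g 0 i = g 0 j" using pe by (simp add: P_def phim1 g0)
        then show ?thesis using mmin[of 0 i j] True by simp
      next
        case False
        then have e0: "e \<ge> 0" using pe P_def by simp
        then have "g (nat e) i = - g (nat e) j" using pe by (simp add: P_def phin eq_neg_iff_add_eq_0)
        then have "g (Suc (nat e)) i = g (Suc (nat e)) j" using fsq by (simp add: gS)
        then show ?thesis using mmin[of "Suc (nat e)" i j] e0 by simp
      qed
    qed
    have "d i j = int (m i j) - 1"
      unfolding dP by (rule Least_equality) (use P1 P2 in auto)
    with P1 show ?thesis by simp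
  qed
  have msym: "m i j = m j i" for i j unfolding m_def by metis
  have part1: "\<forall>i\<in>{1..k}. \<forall>j\<in>{1..k}. i \<noteq> j \<longrightarrow>
            (\<exists>e. -1 \<le> e \<and> e \<le> int r - 1 \<and> phi f (x i) (x j) e = 0)"
    using key unfolding P_def by blast
  have part2: "complete_Dk_graph (int r - 1) k d"
    unfolding complete_Dk_graph_def
  proof (intro ballI impI)
    fix i j assume i: "i \<in> {1..k}" and j: "j \<in> {1..k}" and "i \<noteq> j"
    show "d i j = d j i \<and> -1 \<le> d i j \<and> d i j \<le> int r - 1"
      using key[OF i j] key[OF j i] msym[of i j] unfolding P_def by simp
  qed
  have two: "(2::'a) \<noteq> 0" using two_nz assms(3) by blast
  have part3: "proper_graph k d"
    unfolding proper_graph_def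
  proof (intro ballI impI)
    fix u v w assume u: "u \<in> {1..k}" and v: "v \<in> {1..k}" and w: "w \<in> {1..k}"
      and H: "u \<noteq> v \<and> u \<noteq> w \<and> v \<noteq> w \<and> d u v \<le> d u w \<and> d u w \<le> d v w"
    have duv: "d u v = int (m u v) - 1" using key[OF u v] by simp
    have duw: "d u w = int (m u w) - 1" using key[OF u w] by simp
    have dvw: "d v w = int (m v w) - 1" using key[OF v w] by simp
    have l1: "m u v \<le> m u w" and l2: "m u w \<le> m v w" using H duv duw dvw by auto
    have "g (m u w) v = g (m u w) u" using mono'[OF conjunct1[OF ex[OF u v]] l1] by simp
    also have "\<dots> = g (m u w) w" using ex[OF u w] by simp
    finally have "m v w \<le> m u w" by (rule mmin)
    hence eq: "m u w = m v w" using l2 by simp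
    show "(d u v = -1 \<and> d u w = -1 \<and> d v w = -1) \<or> (d u v < d u w \<and> d u w = d v w)"
    proof (cases "m u v < m u w")
      case True then show ?thesis using duv duw dvw eq by simp
    next
      case False
      hence e2: "m u v = m u w" using l1 by simp
      show ?thesis
      proof (cases "m u w")
        case 0 then show ?thesis using duv duw dvw eq e2 by simp
      next
        case (Suc p)
        have gen: "s \<in> {1..k} \<Longrightarrow> t \<in> {1..k} \<Longrightarrow> m s t = Suc p \<Longrightarrow> g p s = - g p t \<and> g p s \<noteq> g p t" for s t
        proof -
          assume s: "s \<in> {1..k}" and t: "t \<in> {1..k}" and ms: "m s t = Suc p"
          have "g p s \<noteq> g p t" using mmin[of p s t] ms by auto
          moreover have "f (g p s) = f (g p t)" using ex[OF s t] ms by (simp add: gS)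
          ultimately show ?thesis using fsq by blast
        qed
        have muv: "m u v = Suc p" using Suc e2 by simp
        have A: "g p u = - g p v" using gen[OF u v muv] by (rule conjunct1)
        have B: "g p u = - g p w" using gen[OF u w Suc] by (rule conjunct1)
        have mvw: "m v w = Suc p" using Suc eq by simp
        have C0: "g p v = - g p w \<and> g p v \<noteq> g p w" by (rule gen[OF v w mvw])
        have C: "g p v = - g p w" "g p v \<noteq> g p w" using C0 by (rule conjunct1, rule conjunct2)
        have "- g p v = - g p w" using A[symmetric] B by (rule trans)
        hence vw: "g p v = g p w" by (simp only: neg_equal_iff_equal)
        have "g p w = - g p w" using C(1) unfolding vw .
        hence "g p w + g p w = 0" by (simp only: eq_neg_iff_add_eq_0)
        hence "2 * g p w = 0" by (simp only: mult_2)
        hence "g p w = 0" using two mult_eq_0_iff by blast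
        hence False using C(2) vw by blast
        then show ?thesis ..
      qed
    qed
  qed
  show ?thesis by (rule conjI[OF part1 conjI[OF part2 part3]])
qed

end
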